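(* For every $n\ge0$, the number of restricted ascent sequences of length $n$ equals the $n$-th Catalan number $C_n=\frac{1}{n+1}\binom{2n}{n}$.
   Context: For a sequence $(y_1,\dots,y_k)$ of integers, $\mathrm{asc}(y_1,\dots,y_k)=|\{1\le j<k: y_j<y_{j+1}\}|$. A restricted ascent sequence of length $n$ is a sequence $(x_1,\dots,x_n)$ of nonnegative integers with $x_1=0$ and, for all $2\le i\le n$, $m-1\le x_i\le 1+\mathrm{asc}(x_1,\dots,x_{i-1})$, where $m=\max(x_1,\dots,x_{i-1})$. The empty sequence is the unique restricted ascent sequence of length $0$. *)

theory Defs
  imports Complex_Main
begin

definition asc :: "nat list \<Rightarrow> nat" where
  "asc ys = card {j. j + 1 < length ys \<and> ys ! j < ys ! (j + 1)}"

definition restricted_ascent :: "nat list \<Rightarrow> bool" where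
  "restricted_ascent xs \<longleftrightarrow>
     (xs = [] \<or>
      (xs ! 0 = 0 \<and>
       (\<forall>i. 1 \<le> i \<and> i < length xs \<longrightarrow>
          int (Max (set (take i xs))) - 1 \<le> int (xs ! i) \<and>
          xs ! i \<le> 1 + asc (take i xs))))"

end

theory Submission
  imports Defs "HOL-Computational_Algebra.Formal_Power_Series"
begin
unbundle fps_syntax


lemma asc_snoc:
  "asc (xs @ [x]) = asc xs + (if xs \<noteq> [] \<and> last xs < x then 1 else 0)"
proof -
  let ?A = "{j. j + 1 < length xs \<and> xs ! j < xs ! (j + 1)}"
  let ?B = "{j. j + 1 < length (xs @ [x]) \<and> (xs @ [x]) ! j < (xs @ [x]) ! (j + 1)}"
  have fA: "finite ?A" by (rule finite_subset[of _ "{..<length xs}"]) auto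
  have B: "?B = ?A \<union> (if xs \<noteq> [] \<and> last xs < x then {length xs - 1} else {})"
  proof (cases "xs = []")
    case True then show ?thesis by auto
  next
    case False
    show ?thesis
    proof (intro set_eqI iffI)
      fix j assume "j \<in> ?B"
      then have j: "j + 1 < length xs + 1" and lt: "(xs @ [x]) ! j < (xs @ [x]) ! (j + 1)" by auto
      show "j \<in> ?A \<union> (if xs \<noteq> [] \<and> last xs < x then {length xs - 1} else {})"
      proof (cases "j + 1 < length xs")
        case True then show ?thesis using lt by (auto simp: nth_append)
      next
        case f: False
        then have "j = length xs - 1" using j by auto
        then show ?thesis using lt False f by (auto simp: nth_append last_conv_nth)
      qed
    next
      fix j assume "j \<in> ?A \<union> (if xs \<noteq> [] \<and> last xs < x then {length xs - 1} else {})"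
      then show "j \<in> ?B" using False
        by (auto simp: nth_append last_conv_nth split: if_splits)
    qed
  qed
  have "length xs - 1 \<notin> ?A" by auto
  then show ?thesis unfolding asc_def using B fA by (auto simp: card_insert_if)
qed

lemma intm1: "int m - 1 \<le> int x \<longleftrightarrow> m - 1 \<le> x" by arith

lemma R_snoc:
  assumes ne: "xs \<noteq> []"
  shows "restricted_ascent (xs @ [x]) \<longleftrightarrow>
     restricted_ascent xs \<and> Max (set xs) - 1 \<le> x \<and> x \<le> 1 + asc xs"
proof -
  have e1: "(xs @ [x]) ! 0 = xs ! 0" using ne by (simp add: nth_append)
  have P: "(\<forall>i. 1 \<le> i \<and> i < length (xs @ [x]) \<longrightarrow>
          int (Max (set (take i (xs @ [x])))) - 1 \<le> int ((xs @ [x]) ! i) \<and>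
          (xs @ [x]) ! i \<le> 1 + asc (take i (xs @ [x])))
     \<longleftrightarrow> (\<forall>i. 1 \<le> i \<and> i < length xs \<longrightarrow>
          int (Max (set (take i xs))) - 1 \<le> int (xs ! i) \<and>
          xs ! i \<le> 1 + asc (take i xs)) \<and> Max (set xs) - 1 \<le> x \<and> x \<le> 1 + asc xs"
    (is "?L \<longleftrightarrow> ?R1 \<and> ?c")
  proof
    assume L: ?L
    have "?R1"
    proof (intro allI impI)
      fix i assume i: "1 \<le> i \<and> i < length xs"
      then show "int (Max (set (take i xs))) - 1 \<le> int (xs ! i) \<and> xs ! i \<le> 1 + asc (take i xs)"
        using L[rule_format, of i] by (simp add: nth_append)
    qed
    moreover have "?c" using L[rule_format, of "length xs"] ne
      by (auto simp: nth_append intm1 Suc_le_eq)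
    ultimately show "?R1 \<and> ?c" by blast
  next
    assume R: "?R1 \<and> ?c"
    show ?L
    proof (intro allI impI)
      fix i assume i: "1 \<le> i \<and> i < length (xs @ [x])"
      show "int (Max (set (take i (xs @ [x])))) - 1 \<le> int ((xs @ [x]) ! i) \<and>
          (xs @ [x]) ! i \<le> 1 + asc (take i (xs @ [x]))"
      proof (cases "i < length xs")
        case True then show ?thesis using R i by (simp add: nth_append)
      next
        case False
        then have "i = length xs" using i by simp
        then show ?thesis using R by (auto simp: nth_append intm1)
      qed
    qed
  qed
  show ?thesis unfolding restricted_ascent_def using ne e1 P by auto
qed




lemma R_prefix: "restricted_ascent (xs @ ys) \<Longrightarrow> restricted_ascent xs"
proof (induction ys rule: rev_induct)
  case Nil then show ?case by simp
next
  case (snoc y ys)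
  then show ?case
  proof (cases "xs @ ys = []")
    case True then show ?thesis by (simp add: restricted_ascent_def)
  next
    case False
    then show ?thesis using snoc R_snoc[of "xs @ ys" y] by simp
  qed
qed

lemma Max_snoc: "xs \<noteq> [] \<Longrightarrow> Max (set (xs @ [x])) = max (Max (set xs)) x"
  by (simp add: max.commute)

lemma R_inv:
  assumes "restricted_ascent xs" "xs \<noteq> []"
  shows "Max (set xs) \<le> asc xs \<and> Max (set xs) \<le> last xs + 1 \<and> (Max (set xs) = 0 \<longrightarrow> asc xs = 0)"
  using assms
proof (induction xs rule: rev_induct)
  case Nil then show ?case by simp
next
  case (snoc x xs)
  show ?case
  proof (cases "xs = []")
    case True
    then have "x = 0" using snoc.prems by (simp add: restricted_ascent_def)
    then show ?thesis using True by (simp add: asc_def)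
  next
    case False
    have R: "restricted_ascent xs" and c: "Max (set xs) - 1 \<le> x" "x \<le> 1 + asc xs"
      using snoc.prems R_snoc[OF False] by auto
    have IH: "Max (set xs) \<le> asc xs" "Max (set xs) \<le> last xs + 1" "Max (set xs) = 0 \<longrightarrow> asc xs = 0"
      using snoc.IH[OF R False] by auto
    have lm: "last xs \<le> Max (set xs)" using False by simp
    have e1: "Max (set (xs @ [x])) = max (Max (set xs)) x" using Max_snoc[OF False] .
    have e2: "asc (xs @ [x]) = asc xs + (if last xs < x then 1 else 0)" using asc_snoc[of xs x] False by simp
    show ?thesis unfolding e1 e2 last_snoc using IH c lm
      by (cases "last xs < x") (simp_all add: max_def, linarith+)
  qed
qed

definition st :: "nat list \<Rightarrow> nat" where
  "st xs = (let m = Max (set xs); a = asc xs in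
     if m = 0 then 0 else if last xs = m then 2 * (a - m) + 1 else 2 * (a - m) + 2)"

lemma st_single: "st [0] = 0" by (simp add: st_def)




fun W :: "nat \<Rightarrow> nat \<Rightarrow> nat" where
  "W 0 p = 1"
| "W (Suc k) p = W k (p + 1) + W k p + (\<Sum>j<(p + 1) div 2. W k (2 * j + 1))"

lemma st_snoc:
  assumes "xs \<noteq> []"
  shows "st (xs @ [x]) = (let m' = max (Max (set xs)) x; a' = asc xs + (if last xs < x then 1 else 0) in
     if m' = 0 then 0 else if x = m' then 2 * (a' - m') + 1 else 2 * (a' - m') + 2)"
  using assms by (simp add: st_def Max_snoc asc_snoc Let_def)

lemma sum_rev_interval:
  "(\<Sum>x\<in>{m+1..m+c}. g (m + c - x)) = (\<Sum>j<c. (g j :: nat))" for m c :: nat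
  by (rule sum.reindex_bij_witness[of _ "\<lambda>j. m + c - j" "\<lambda>x. m + c - x"]) auto

lemma trans_sum:
  assumes R: "restricted_ascent xs" and ne: "xs \<noteq> []"
  shows "(\<Sum>x\<in>{Max (set xs) - 1..1 + asc xs}. W k (st (xs @ [x]))) = W (Suc k) (st xs)"
proof -
  define m where "m = Max (set xs)"
  define a where "a = asc xs"
  define l where "l = last xs"
  have inv: "m \<le> a" "m \<le> l + 1" "m = 0 \<longrightarrow> a = 0"
    using R_inv[OF R ne] unfolding m_def a_def l_def by auto
  have lm: "l \<le> m" unfolding l_def m_def using ne by simp
  have S: "\<And>x. st (xs @ [x]) = (let m' = max m x; a' = a + (if l < x then 1 else 0) in
     if m' = 0 then 0 else if x = m' then 2 * (a' - m') + 1 else 2 * (a' - m') + 2)"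
    using st_snoc[OF ne] unfolding m_def a_def l_def by simp
  have S0: "st xs = (if m = 0 then 0 else if l = m then 2 * (a - m) + 1 else 2 * (a - m) + 2)"
    unfolding st_def m_def a_def l_def by (simp add: Let_def)
  show ?thesis
  proof (cases "m = 0")
    case True
    then have a0: "a = 0" using inv by simp
    have l0: "l = 0" using lm True by simp
    have I: "{Max (set xs) - 1..1 + asc xs} = {0, 1}" using True a0 unfolding m_def a_def by auto
    show ?thesis unfolding I using True a0 l0 by (simp add: S S0)
  next
    case False
    have I: "{Max (set xs) - 1..1 + asc xs} = insert (m - 1) (insert m {m+1..m+(a+1-m)})"
      using False inv unfolding m_def[symmetric] a_def[symmetric] by auto
    have up: "(\<Sum>x\<in>{m+1..m+(a+1-m)}. W k (st (xs @ [x]))) = (\<Sum>j<a+1-m. W k (2 * j + 1))"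
    proof -
      have "(\<Sum>x\<in>{m+1..m+(a+1-m)}. W k (st (xs @ [x]))) =
            (\<Sum>x\<in>{m+1..m+(a+1-m)}. (\<lambda>j. W k (2 * j + 1)) (m + (a+1-m) - x))"
      proof (rule sum.cong)
        fix x assume x: "x \<in> {m+1..m+(a+1-m)}"
        then have "m < x" "x \<le> a + 1" "l < x" using lm inv by auto
        then show "W k (st (xs @ [x])) = (\<lambda>j. W k (2 * j + 1)) (m + (a+1-m) - x)"
          by (simp add: S Let_def max_def)
      qed simp
      also have "\<dots> = (\<Sum>j<a+1-m. W k (2 * j + 1))" by (rule sum_rev_interval)
      finally show ?thesis .
    qed
    have fin: "finite {m+1..m+(a+1-m)}" by simp
    have nm: "m - 1 \<notin> insert m {m+1..m+(a+1-m)}" "m \<notin> {m+1..m+(a+1-m)}" using False by auto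
    have split: "(\<Sum>x\<in>{Max (set xs) - 1..1 + asc xs}. W k (st (xs @ [x]))) =
        W k (st (xs @ [m - 1])) + W k (st (xs @ [m])) + (\<Sum>j<a+1-m. W k (2 * j + 1))"
      unfolding I using nm fin up by (simp add: sum.insert_if)
    show ?thesis
    proof (cases "l = m")
      case True
      have e1: "st (xs @ [m - 1]) = 2 * (a - m) + 2" using False True by (simp add: S Let_def max_def)
      have e2: "st (xs @ [m]) = 2 * (a - m) + 1" using False True by (simp add: S Let_def max_def)
      have e3: "st xs = 2 * (a - m) + 1" using False True S0 by simp
      have e4: "(2 * (a - m) + 1 + 1) div 2 = a + 1 - m" using inv by simp
      show ?thesis unfolding split e1 e2 e3 W.simps e4 by simp
    next
      case lf: False
      then have ll: "l = m - 1" using lm inv by simp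
      have e1: "st (xs @ [m - 1]) = 2 * (a - m) + 2" using False ll by (simp add: S Let_def max_def)
      have e2: "st (xs @ [m]) = 2 * (a - m) + 2 + 1" using False ll inv by (simp add: S Let_def max_def)
      have e3: "st xs = 2 * (a - m) + 2" using False lf S0 by simp
      have e4: "(2 * (a - m) + 2 + 1) div 2 = a + 1 - m" using inv by simp
      show ?thesis unfolding split e1 e2 e3 W.simps e4 by simp
    qed
  qed
qed




lemma ext_count:
  assumes "restricted_ascent ys" "ys \<noteq> []"
  shows "finite {zs. length zs = k \<and> restricted_ascent (ys @ zs)} \<and>
         card {zs. length zs = k \<and> restricted_ascent (ys @ zs)} = W k (st ys)"
  using assms
proof (induction k arbitrary: ys)
  case 0
  then have "{zs. length zs = 0 \<and> restricted_ascent (ys @ zs)} = {[]}" by auto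
  then show ?case by simp
next
  case (Suc k)
  let ?I = "{Max (set ys) - 1..1 + asc ys}"
  let ?E = "\<lambda>x. {zs. length zs = k \<and> restricted_ascent ((ys @ [x]) @ zs)}"
  have eq: "{zs. length zs = Suc k \<and> restricted_ascent (ys @ zs)} = (\<Union>x\<in>?I. (#) x ` ?E x)"
  proof (intro set_eqI iffI)
    fix zs assume "zs \<in> {zs. length zs = Suc k \<and> restricted_ascent (ys @ zs)}"
    then obtain x zs' where z: "zs = x # zs'" "length zs' = k" "restricted_ascent (ys @ x # zs')"
      by (cases zs) auto
    have "restricted_ascent (ys @ [x])" using z(3) R_prefix[of "ys @ [x]" zs'] by simp
    then have "x \<in> ?I" using R_snoc[OF Suc.prems(2)] by auto
    then show "zs \<in> (\<Union>x\<in>?I. (#) x ` ?E x)" using z by auto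
  next
    fix zs assume "zs \<in> (\<Union>x\<in>?I. (#) x ` ?E x)"
    then show "zs \<in> {zs. length zs = Suc k \<and> restricted_ascent (ys @ zs)}" by auto
  qed
  have R1: "\<And>x. x \<in> ?I \<Longrightarrow> restricted_ascent (ys @ [x])"
    using R_snoc[OF Suc.prems(2)] Suc.prems(1) by auto
  have IH: "\<And>x. x \<in> ?I \<Longrightarrow> finite (?E x) \<and> card (?E x) = W k (st (ys @ [x]))"
    using Suc.IH R1 by blast
  have fin: "finite (\<Union>x\<in>?I. (#) x ` ?E x)" using IH by auto
  have "card (\<Union>x\<in>?I. (#) x ` ?E x) = (\<Sum>x\<in>?I. card ((#) x ` ?E x))"
    by (rule card_UN_disjoint) (use IH in auto)
  also have "\<dots> = (\<Sum>x\<in>?I. W k (st (ys @ [x])))"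
  proof (rule sum.cong)
    fix x assume x: "x \<in> ?I"
    have "card ((#) x ` ?E x) = card (?E x)" by (simp add: card_image)
    then show "card ((#) x ` ?E x) = W k (st (ys @ [x]))" using IH[OF x] by simp
  qed simp
  also have "\<dots> = W (Suc k) (st ys)" by (rule trans_sum[OF Suc.prems])
  finally show ?case using eq fin by simp
qed

lemma count_Suc: "card {xs. length xs = Suc k \<and> restricted_ascent xs} = W k 0"
proof -
  have R0: "restricted_ascent [0]" by (simp add: restricted_ascent_def)
  have eq: "{xs. length xs = Suc k \<and> restricted_ascent xs} =
      (#) 0 ` {zs. length zs = k \<and> restricted_ascent ([0] @ zs)}"
  proof (intro set_eqI iffI)
    fix xs assume "xs \<in> {xs. length xs = Suc k \<and> restricted_ascent xs}"
    then obtain x zs where z: "xs = x # zs" "length zs = k" "restricted_ascent (x # zs)"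
      by (cases xs) auto
    then have "x = 0" by (simp add: restricted_ascent_def)
    then show "xs \<in> (#) 0 ` {zs. length zs = k \<and> restricted_ascent ([0] @ zs)}" using z by auto
  qed auto
  show ?thesis unfolding eq
    using ext_count[OF R0, of k] by (simp add: card_image st_single)
qed




definition Sq :: "real fps" where "Sq = Abs_fps (\<lambda>n. (-4)^n * ((1/2) gchoose n))"

lemma one_gchoose: "(1::real) gchoose n = (if n \<le> 1 then 1 else 0)"
proof -
  have "(1::real) gchoose n = real (1 choose n)" using binomial_gbinomial[of 1 n, where 'a=real] by simp
  then show ?thesis by (cases n) (auto simp: binomial_eq_0)
qed

lemma SqSq: "Sq * Sq = 1 - fps_const 4 * fps_X"
proof (rule fps_ext)
  fix n
  have "(Sq * Sq) $ n = (\<Sum>i=0..n. (-4)^i * ((1/2) gchoose i) * ((-4)^(n-i) * ((1/2) gchoose (n - i))))"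
    by (simp add: fps_mult_nth Sq_def)
  also have "\<dots> = (\<Sum>i=0..n. (-4)^n * (((1/2) gchoose i) * ((1/2) gchoose (n - i))))"
  proof (rule sum.cong)
    fix i assume "i \<in> {0..n}"
    then have "(-4::real)^i * (-4)^(n-i) = (-4)^n" by (simp flip: power_add)
    then show "(-4)^i * ((1/2) gchoose i) * ((-4)^(n-i) * ((1/2) gchoose (n - i))) =
      (-4::real)^n * (((1/2) gchoose i) * ((1/2) gchoose (n - i)))" by (simp add: algebra_simps)
  qed simp
  also have "\<dots> = (-4)^n * ((1/2 + 1/2) gchoose n)"
    by (simp add: sum_distrib_left[symmetric] gbinomial_Vandermonde)
  also have "\<dots> = (1 - fps_const 4 * fps_X) $ n"
    by (cases n) (auto simp: one_gchoose)
  finally show "(Sq * Sq) $ n = (1 - fps_const 4 * fps_X) $ n" .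
qed

definition Cat :: "real fps" where "Cat = Abs_fps (\<lambda>n. -(1/2) * Sq $ (n + 1))"

lemma XCat: "2 * (fps_X * Cat) = 1 - Sq"
proof (rule fps_ext)
  fix n
  show "(2 * (fps_X * Cat)) $ n = (1 - Sq) $ n"
    by (cases n) (simp_all add: Cat_def Sq_def numeral_fps_const)
qed

lemma Cat_eq: "Cat = 1 + fps_X * Cat^2"
proof -
  let ?H = "fps_X * Cat"
  have "4 * (?H - fps_X - ?H^2) = 2 * (2 * ?H) - fps_const 4 * fps_X - (2 * ?H)^2"
    by (simp add: algebra_simps power2_eq_square numeral_fps_const)
  also have "\<dots> = 2 * (1 - Sq) - fps_const 4 * fps_X - (1 - Sq)^2" by (simp only: XCat)
  also have "\<dots> = 1 - fps_const 4 * fps_X - Sq * Sq"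
    by (simp add: algebra_simps power2_eq_square)
  also have "\<dots> = 0" by (simp add: SqSq)
  finally have "4 * (?H - fps_X - ?H^2) = 0" .
  then have "?H - fps_X - ?H^2 = 0" by (simp add: numeral_fps_const)
  then have "fps_X * (Cat - 1 - fps_X * Cat^2) = 0" by (simp add: algebra_simps power2_eq_square)
  then have "Cat - 1 = fps_X * Cat^2" by simp
  then show ?thesis by (metis add.commute diff_add_cancel)
qed

lemma ratio_aux:
  fixes x0 x1 b0 b1 N :: real
  assumes "N \<ge> 0" "(N + 2) * x1 = (4 * N + 2) * x0" "x0 = b0 / (N + 1)" "(N + 1) * b1 = (4 * N + 2) * b0"
  shows "x1 = b1 / (N + 2)"
proof -
  have "x1 = (4 * N + 2) * x0 / (N + 2)" using assms(1,2) by (simp add: field_simps)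
  also have "\<dots> = (4 * N + 2) * (b0 / (N + 1)) / (N + 2)" by (simp add: assms(3))
  also have "\<dots> = (4 * N + 2) * b0 / ((N + 1) * (N + 2))" by simp
  also have "\<dots> = ((N + 1) * b1) / ((N + 1) * (N + 2))" by (simp only: assms(4))
  also have "\<dots> = b1 / (N + 2)" using assms(1) by simp
  finally show ?thesis .
qed

lemma Cat_nth: "Cat $ n = real ((2 * n) choose n) / real (n + 1)"
proof (induction n)
  case 0 then show ?case by (simp add: Cat_def Sq_def)
next
  case (Suc n)
  have g: "real (Suc (Suc n)) * ((1/2) gchoose (Suc (Suc n))) = (1/2 - real (Suc n)) * ((1/2) gchoose Suc n)"
    using gbinomial_mult_1[of "1/2::real" "Suc n"] by (simp add: algebra_simps)
  have r: "real (n + 2) * Cat $ Suc n = (4 * real n + 2) * Cat $ n"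
  proof -
    have "real (n + 2) * Cat $ Suc n = -(1/2) * (-4)^(n+2) * (real (Suc (Suc n)) * ((1/2) gchoose (Suc (Suc n))))"
      by (simp add: Cat_def Sq_def algebra_simps)
    also have "\<dots> = -(1/2) * (-4)^(n+2) * ((1/2 - real (Suc n)) * ((1/2) gchoose Suc n))" by (simp only: g)
    also have "\<dots> = (4 * real n + 2) * Cat $ n"
      by (simp add: Cat_def Sq_def algebra_simps)
    finally show ?thesis .
  qed
  have b1: "Suc n * (Suc (2*n+1) choose Suc n) = Suc (2*n+1) * ((2*n+1) choose n)"
    by (rule Suc_times_binomial)
  have b2: "Suc (2*n) * ((2*n) choose n) = (Suc (2*n) choose Suc n) * Suc n"
    by (rule Suc_times_binomial_eq)
  have b3: "(Suc (2*n) choose Suc n) = ((2*n+1) choose n)"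
    using binomial_symmetric[of "Suc n" "Suc (2*n)"] by simp
  have b: "(n + 1) * ((2 * Suc n) choose Suc n) = (4 * n + 2) * ((2 * n) choose n)"
  proof -
    have "(n + 1) * ((2 * Suc n) choose Suc n) = (2*n+2) * ((2*n+1) choose n)"
      using b1 by simp
    also have "\<dots> = 2 * (((2*n+1) choose n) * Suc n)" by simp
    also have "\<dots> = 2 * (Suc (2*n) * ((2*n) choose n))" using b2 b3 by simp
    finally show ?thesis by simp
  qed
  have bR0: "real ((n + 1) * ((2 * Suc n) choose Suc n)) = real ((4 * n + 2) * ((2 * n) choose n))"
    using b by (rule arg_cong)
  have bR: "(real n + 1) * real ((2 * Suc n) choose Suc n) = (4 * real n + 2) * real ((2 * n) choose n)"
    using bR0 by (simp only: of_nat_mult of_nat_add of_nat_1 of_nat_numeral)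
  have p1: "(real n + 2) * Cat $ Suc n = (4 * real n + 2) * Cat $ n" using r by (simp add: ac_simps)
  have p2: "Cat $ n = real ((2*n) choose n) / (real n + 1)" using Suc.IH by simp
  have "Cat $ Suc n = real ((2 * Suc n) choose Suc n) / (real n + 2)"
    by (rule ratio_aux[OF _ p1 p2 bR]) simp
  then show ?case by simp
qed




lemma alg0: fixes C X :: "'a::comm_ring_1" assumes "C = 1 + X*C^2"
  shows "C^2 - X*(C^3 + C^2 + 0) = 1"
proof -
  have "C^2 - X*(C^3 + C^2 + 0) - 1 = (C+1)*(C - (1 + X*C^2))"
    by (simp add: algebra_simps power2_eq_square power3_eq_cube)
  then show ?thesis using assms by simp
qed

lemma alg1: fixes C X K Q :: "'a::comm_ring_1" assumes "C = 1 + X*C^2"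
  shows "(C*K - X*(C^2*(1-X)*K + C*K + (Q + C*K))) = (K - X*(C*K + K + Q))"
proof -
  have "(C*K - X*(C^2*(1-X)*K + C*K + (Q + C*K))) - (K - X*(C*K + K + Q)) = K*(1-X)*(C - (1 + X*C^2))"
    by (simp add: algebra_simps power2_eq_square power3_eq_cube)
  then show ?thesis using assms by simp
qed

lemma alg2: fixes C X K Q :: "'a::comm_ring_1" assumes "C = 1 + X*C^2"
  shows "C^2*(1-X)*K - X*(C^3*(1-X)*K + C^2*(1-X)*K + Q) = C*K - X*(C^2*(1-X)*K + C*K + Q)"
proof -
  have "C^2*(1-X)*K - X*(C^3*(1-X)*K + C^2*(1-X)*K + Q) - (C*K - X*(C^2*(1-X)*K + C*K + Q)) = C*K*(1-X)*(C - (1 + X*C^2))"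
    by (simp add: algebra_simps power2_eq_square power3_eq_cube)
  then show ?thesis using assms by simp
qed

definition G :: "nat \<Rightarrow> real fps" where "G p = Cat ^ (p + 2) * (1 - fps_X) ^ (p div 2)"

definition E :: "nat \<Rightarrow> real fps" where
  "E p = G p - fps_X * (G (p + 1) + G p + (\<Sum>j<(p + 1) div 2. G (2 * j + 1)))"

lemma E0: "E 0 = 1"
proof -
  have g0: "G 0 = Cat^2" unfolding G_def by (simp add: power2_eq_square)
  have g1: "G (Suc 0) = Cat^3" unfolding G_def by (simp add: power3_eq_cube)
  have "E 0 = Cat^2 - fps_X * (Cat^3 + Cat^2 + 0)" by (simp add: E_def g0 g1)
  also have "\<dots> = 1" by (rule alg0[OF Cat_eq])
  finally show ?thesis .
qed

lemma E_steps: "E (2 * j + 1) = E (2 * j) \<and> E (2 * j + 2) = E (2 * j + 1)"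
proof -
  define K where "K = Cat ^ (2 * j + 2) * (1 - fps_X) ^ j"
  define Q where "Q = (\<Sum>i<j. G (2 * i + 1))"
  have G0: "G (2 * j) = K" by (simp add: G_def K_def)
  have G1: "G (2 * j + 1) = Cat * K" by (simp add: G_def K_def algebra_simps)
  have G2: "G (2 * j + 2) = Cat^2 * (1 - fps_X) * K"
  proof -
    have "(2 * j + 2) div 2 = Suc j" by simp
    then show ?thesis by (simp add: G_def K_def algebra_simps power_add power2_eq_square)
  qed
  have G3: "G (2 * j + 3) = Cat^3 * (1 - fps_X) * K"
  proof -
    have d: "(2 * j + 3) div 2 = Suc j" by simp
    have p1a: "Cat^(2*j+3+2) = Cat^(3 + (2*j+2))" by (rule arg_cong[where f="\<lambda>e. Cat^e"]) simp
    have p1: "Cat^(2*j+3+2) = Cat^3 * Cat^(2*j+2)" unfolding p1a by (rule power_add)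
    have p2: "(1 - fps_X :: real fps)^(Suc j) = (1 - fps_X) * (1 - fps_X)^j" by simp
    show ?thesis unfolding G_def K_def d p1 p2 by (simp add: mult_ac)
  qed
  have d0: "(2 * j + 1) div 2 = j" "(2 * j + 1 + 1) div 2 = Suc j" "(2 * j + 2 + 1) div 2 = Suc j" by simp_all
  have Ea: "E (2 * j) = K - fps_X * (Cat * K + K + Q)"
    unfolding E_def d0 using G0 G1 Q_def by simp
  have Eb: "E (2 * j + 1) = Cat * K - fps_X * (Cat^2 * (1 - fps_X) * K + Cat * K + (Q + Cat * K))"
    unfolding E_def d0 using G1 G2 Q_def by (simp add: add.commute)
  have Eb': "E (2 * j + 1) = Cat * K - fps_X * (Cat^2 * (1 - fps_X) * K + Cat * K + (Q + Cat * K))" by (rule Eb)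
  have Ec: "E (2 * j + 2) = Cat^2 * (1 - fps_X) * K - fps_X * (Cat^3 * (1 - fps_X) * K + Cat^2 * (1 - fps_X) * K + (Q + Cat * K))"
  proof -
    have "E (2 * j + 2) = G (2*j+2) - fps_X * (G (2*j+2+1) + G (2*j+2) + (\<Sum>i<Suc j. G (2 * i + 1)))"
      unfolding E_def d0 by simp
    also have "\<dots> = Cat^2 * (1 - fps_X) * K - fps_X * (Cat^3 * (1 - fps_X) * K + Cat^2 * (1 - fps_X) * K + (Q + Cat * K))"
      using G1 G2 G3 Q_def by (simp add: add.commute numeral_3_eq_3)
    finally show ?thesis .
  qed
  have "E (2 * j + 1) = E (2 * j)" unfolding Eb Ea by (rule alg1[OF Cat_eq])
  moreover have "E (2 * j + 2) = E (2 * j + 1)" unfolding Ec Eb by (rule alg2[OF Cat_eq])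
  ultimately show ?thesis by simp
qed

lemma E_one: "E p = 1"
proof (induction p)
  case 0 then show ?case by (rule E0)
next
  case (Suc p)
  show ?case
  proof (cases "even p")
    case True
    then obtain j where "p = 2 * j" by blast
    then show ?thesis using E_steps[of j] Suc by simp
  next
    case False
    then obtain j where "p = 2 * j + 1" using oddE by blast
    then show ?thesis using E_steps[of j] Suc by simp
  qed
qed


lemma G_rec: "G p = 1 + fps_X * (G (p + 1) + G p + (\<Sum>j<(p + 1) div 2. G (2 * j + 1)))"
  using E_one[of p] unfolding E_def by (simp add: diff_eq_eq)

lemma W_eq: "real (W k p) = G p $ k"
proof (induction k arbitrary: p)
  case 0
  have "G p $ 0 = 1" by (subst G_rec) simp
  then show ?case by simp
next
  case (Suc k)
  have "G p $ Suc k = (G (p + 1) + G p + (\<Sum>j<(p + 1) div 2. G (2 * j + 1))) $ k"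
    by (subst G_rec) simp
  also have "\<dots> = real (W (Suc k) p)"
    by (simp add: fps_sum_nth Suc.IH)
  finally show ?case by simp
qed

lemma nth_aux: "(1 + fps_X * f) $ Suc k = (f :: real fps) $ k" by simp

theorem theorem10:
  fixes n :: nat
  shows "real (card {xs. length xs = n \<and> restricted_ascent xs})
           = real ((2 * n) choose n) / real (n + 1)"
proof (cases n)
  case 0
  have "{xs. length xs = 0 \<and> restricted_ascent xs} = {[]}" by (auto simp: restricted_ascent_def)
  then show ?thesis using 0 by simp
next
  case (Suc k)
  have "real (card {xs. length xs = n \<and> restricted_ascent xs}) = G 0 $ k"
    using Suc count_Suc W_eq by simp
  also have "\<dots> = (Cat ^ 2) $ k" unfolding G_def by (simp add: power2_eq_square)
  also have "\<dots> = (1 + fps_X * Cat^2) $ Suc k" by (rule nth_aux[symmetric])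
  also have "\<dots> = Cat $ Suc k" using Cat_eq by metis
  also have "\<dots> = real ((2 * n) choose n) / real (n + 1)" using Suc Cat_nth by simp
  finally show ?thesis .
qed


end
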